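(* Let $\Omega$ be a connected weighted simplicial complex on $[n]$, let $\mathcal V_0,\ldots,\mathcal V_n$ be complex vector spaces and $\mathcal V=\mathcal V_0\otimes\cdots\otimes\mathcal V_n$ (algebraic tensor product). Then every $v\in\mathcal V$ satisfies ${\rm rank}_\Omega(v)<\infty$, i.e. every $v\in\mathcal V$ admits an $\Omega$-decomposition.
   Context: $[n]=\{0,\ldots,n\}$. A weighted simplicial complex (wsc) on $[n]$ is a function $\Omega\colon\mathcal P([n])\to\mathbb N=\{0,1,\ldots\}$ such that $S_1\subseteq S_2$ implies $\Omega(S_1)\mid\Omega(S_2)$; simplices are sets with $\Omega(S)\ne0$, every singleton is assumed to be a simplex, and facets are inclusion-maximal simplices. $\widetilde{\mathcal F}$ is the multiset containing each facet $F$ exactly $\Omega(F)$ times, and for $i\in[n]$, $\widetilde{\mathcal F}_i\subseteq\widetilde{\mathcal F}$ is the sub-multiset of (copies of) facets containing $i$. Vertices $i,j$ are neighbours if some facet contains both; $\Omega$ is connected if any two vertices are joined by a finite chain of successive neighbours. For a finite set $\mathcal I$ and $\alpha\colon\widetilde{\mathcal F}\to\mathcal I$, write $\alpha_{\mid i}$ for the restriction of $\alpha$ to $\widetilde{\mathcal F}_i$. An $\Omega$-decomposition of $v\in\mathcal V$ consists of a finite set $\mathcal I$ and vectors $v^{[i]}_\beta\in\mathcal V_i$ for $i\in[n]$ and $\beta\in\mathcal I^{\widetilde{\mathcal F}_i}$ (functions $\widetilde{\mathcal F}_i\to\mathcal I$) such that $v=\sum_{\alpha\in\mathcal I^{\widetilde{\mathcal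 F}}}v^{[0]}_{\alpha_{\mid 0}}\otimes\cdots\otimes v^{[n]}_{\alpha_{\mid n}}$. ${\rm rank}_\Omega(v)$ is the smallest $|\mathcal I|$ over all $\Omega$-decompositions of $v$, and $\infty$ if none exists. *)

theory Defs
  imports "HOL-Analysis.Analysis"
begin

definition wsc :: "nat \<Rightarrow> (nat set \<Rightarrow> nat) \<Rightarrow> bool" where
  "wsc n \<Omega> \<longleftrightarrow>
     (\<forall>S1 S2. S1 \<subseteq> S2 \<and> S2 \<subseteq> {0..n} \<longrightarrow> \<Omega> S1 dvd \<Omega> S2) \<and>
     (\<forall>i\<in>{0..n}. \<Omega> {i} \<noteq> 0)"

definition wsc_simplex :: "nat \<Rightarrow> (nat set \<Rightarrow> nat) \<Rightarrow> nat set \<Rightarrow> bool" where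
  "wsc_simplex n \<Omega> S \<longleftrightarrow> S \<subseteq> {0..n} \<and> \<Omega> S \<noteq> 0"

definition wsc_facet :: "nat \<Rightarrow> (nat set \<Rightarrow> nat) \<Rightarrow> nat set \<Rightarrow> bool" where
  "wsc_facet n \<Omega> F \<longleftrightarrow> wsc_simplex n \<Omega> F \<and> (\<forall>S. wsc_simplex n \<Omega> S \<and> F \<subseteq> S \<longrightarrow> S = F)"

text \<open>The multiset of facets, each wsc_facet F taken Omega(F) times; the copies of F
  are represented as the pairs (F, k) with k < Omega(F).\<close>
definition facets_mult :: "nat \<Rightarrow> (nat set \<Rightarrow> nat) \<Rightarrow> (nat set \<times> nat) set" where
  "facets_mult n \<Omega> = {(F, k). wsc_facet n \<Omega> F \<and> k < \<Omega> F}"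

definition facets_mult_at :: "nat \<Rightarrow> (nat set \<Rightarrow> nat) \<Rightarrow> nat \<Rightarrow> (nat set \<times> nat) set" where
  "facets_mult_at n \<Omega> i = {Fk \<in> facets_mult n \<Omega>. i \<in> fst Fk}"

definition neighbours :: "nat \<Rightarrow> (nat set \<Rightarrow> nat) \<Rightarrow> nat \<Rightarrow> nat \<Rightarrow> bool" where
  "neighbours n \<Omega> i j \<longleftrightarrow> (\<exists>F. wsc_facet n \<Omega> F \<and> i \<in> F \<and> j \<in> F)"

definition wsc_connected :: "nat \<Rightarrow> (nat set \<Rightarrow> nat) \<Rightarrow> bool" where
  "wsc_connected n \<Omega> \<longleftrightarrow>
     (\<forall>i\<in>{0..n}. \<forall>j\<in>{0..n}. (neighbours n \<Omega>)\<^sup>*\<^sup>* i j)"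

text \<open>The spaces V i are complex subspaces of a common ambient complex vector space
  (scalar multiplication sV).  The tensor product is the whole complex vector space 't
  (scalar multiplication sT) together with the canonical multilinear map tens, given on
  tuples x with x i in V i for i in {0..n} (extensional outside {0..n}).\<close>

definition multilinear_on ::
  "(complex \<Rightarrow> 'v::ab_group_add \<Rightarrow> 'v) \<Rightarrow> (complex \<Rightarrow> 't::ab_group_add \<Rightarrow> 't) \<Rightarrow>
   nat \<Rightarrow> (nat \<Rightarrow> 'v set) \<Rightarrow> ((nat \<Rightarrow> 'v) \<Rightarrow> 't) \<Rightarrow> bool" where
  "multilinear_on sV sT n V tens \<longleftrightarrow>
     (\<forall>x \<in> PiE {0..n} V. \<forall>j\<in>{0..n}. \<forall>u\<in>V j. \<forall>w\<in>V j. \<forall>a b.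
        tens (x(j := sV a u + sV b w)) = sT a (tens (x(j := u))) + sT b (tens (x(j := w))))"

definition is_tensor_product ::
  "(complex \<Rightarrow> 'v::ab_group_add \<Rightarrow> 'v) \<Rightarrow> (complex \<Rightarrow> 't::ab_group_add \<Rightarrow> 't) \<Rightarrow>
   nat \<Rightarrow> (nat \<Rightarrow> 'v set) \<Rightarrow> ((nat \<Rightarrow> 'v) \<Rightarrow> 't) \<Rightarrow> bool" where
  "is_tensor_product sV sT n V tens \<longleftrightarrow>
     vector_space sV \<and> vector_space sT \<and>
     (\<forall>i\<in>{0..n}. module.subspace sV (V i)) \<and>
     multilinear_on sV sT n V tens \<and>
     module.span sT (tens ` PiE {0..n} V) = UNIV \<and>
     (\<forall>B. (\<forall>i\<in>{0..n}. B i \<subseteq> V i \<and> \<not> module.dependent sV (B i)) \<longrightarrow>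
          inj_on tens (PiE {0..n} B) \<and> \<not> module.dependent sT (tens ` PiE {0..n} B))"

text \<open>An Omega-decomposition of v with index set I (a finite set, w.l.o.g. of naturals):
  vectors vb i beta in V i for i in {0..n} and beta : Ftilde_i \<rightarrow> I, such that
  v is the sum over alpha : Ftilde \<rightarrow> I of the elementary tensors of the vb i (alpha|_i).\<close>
definition Omega_decomposition ::
  "(complex \<Rightarrow> 'v::ab_group_add \<Rightarrow> 'v) \<Rightarrow> nat \<Rightarrow> (nat set \<Rightarrow> nat) \<Rightarrow> (nat \<Rightarrow> 'v set) \<Rightarrow>
   ((nat \<Rightarrow> 'v) \<Rightarrow> 't::ab_group_add) \<Rightarrow> 't \<Rightarrow> nat set \<Rightarrow>
   (nat \<Rightarrow> ((nat set \<times> nat) \<Rightarrow> nat) \<Rightarrow> 'v) \<Rightarrow> bool" where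
  "Omega_decomposition sV n \<Omega> V tens v I vb \<longleftrightarrow>
     finite I \<and>
     (\<forall>i\<in>{0..n}. \<forall>\<beta> \<in> PiE (facets_mult_at n \<Omega> i) (\<lambda>_. I). vb i \<beta> \<in> V i) \<and>
     v = (\<Sum>\<alpha> \<in> PiE (facets_mult n \<Omega>) (\<lambda>_. I).
            tens (restrict (\<lambda>i. vb i (restrict \<alpha> (facets_mult_at n \<Omega> i))) {0..n}))"

definition has_Omega_decomposition ::
  "(complex \<Rightarrow> 'v::ab_group_add \<Rightarrow> 'v) \<Rightarrow> nat \<Rightarrow> (nat set \<Rightarrow> nat) \<Rightarrow> (nat \<Rightarrow> 'v set) \<Rightarrow>
   ((nat \<Rightarrow> 'v) \<Rightarrow> 't::ab_group_add) \<Rightarrow> 't \<Rightarrow> bool" where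
  "has_Omega_decomposition sV n \<Omega> V tens v \<longleftrightarrow>
     (\<exists>I vb. Omega_decomposition sV n \<Omega> V tens v I vb)"

definition rank_Omega ::
  "(complex \<Rightarrow> 'v::ab_group_add \<Rightarrow> 'v) \<Rightarrow> nat \<Rightarrow> (nat set \<Rightarrow> nat) \<Rightarrow> (nat \<Rightarrow> 'v set) \<Rightarrow>
   ((nat \<Rightarrow> 'v) \<Rightarrow> 't::ab_group_add) \<Rightarrow> 't \<Rightarrow> enat" where
  "rank_Omega sV n \<Omega> V tens v =
     (INF I \<in> {I. \<exists>vb. Omega_decomposition sV n \<Omega> V tens v I vb}. enat (card I))"

end

theory Submission
  imports Defs
begin

lemma facet_exists:
  assumes "wsc n \<Omega>" "i \<in> {0..n}"
  shows "\<exists>F. wsc_facet n \<Omega> F \<and> i \<in> F"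
proof -
  let ?A = "{S. S \<subseteq> {0..n} \<and> \<Omega> S \<noteq> 0 \<and> i \<in> S}"
  have fin: "finite ?A" by (rule finite_subset[of _ "Pow {0..n}"]) auto
  have "{i} \<in> ?A" using assms unfolding wsc_def by auto
  then have ne: "?A \<noteq> {}" by blast
  from finite_has_maximal[OF fin ne] obtain F where F: "F \<in> ?A"
    and mx: "\<forall>b\<in>?A. F \<le> b \<longrightarrow> F = b" by blast
  have "wsc_facet n \<Omega> F"
    unfolding wsc_facet_def wsc_simplex_def using F mx by blast
  then show ?thesis using F by blast
qed

lemma facet_nonempty:
  assumes "wsc n \<Omega>" "wsc_facet n \<Omega> F"
  shows "F \<noteq> {}"
proof
  assume "F = {}"
  have "wsc_simplex n \<Omega> {0}" using assms(1) unfolding wsc_def wsc_simplex_def by auto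
  then show False using assms(2) \<open>F = {}\<close> unfolding wsc_facet_def by blast
qed

lemma Ft_finite: "finite (facets_mult n \<Omega>)"
proof (rule finite_subset)
  show "facets_mult n \<Omega> \<subseteq> Sigma (Pow {0..n}) (\<lambda>F. {..<\<Omega> F})"
    unfolding facets_mult_def wsc_facet_def wsc_simplex_def by auto
  show "finite (Sigma (Pow {0..n}) (\<lambda>F. {..<\<Omega> F}))" by (rule finite_SigmaI) auto
qed

lemma tens_zero:
  assumes ml: "multilinear_on sV sT n V tens" and mV: "module sV" and mT: "module sT"
    and sub: "\<forall>i\<in>{0..n}. module.subspace sV (V i)"
    and y: "y \<in> PiE {0..n} V" and i: "i \<in> {0..n}" and yi: "y i = 0"
  shows "tens y = 0"
proof -
  have z: "0 \<in> V i" using sub i module.subspace_0[OF mV] by blast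
  have "tens (y(i := sV 0 0 + sV 0 0)) = sT 0 (tens (y(i := 0))) + sT 0 (tens (y(i := 0)))"
    using ml y i z unfolding multilinear_on_def by blast
  moreover have "y(i := sV 0 0 + sV 0 0) = y" using yi module.scale_zero_left[OF mV] by auto
  ultimately show ?thesis using module.scale_zero_left[OF mT] by simp
qed

lemma tens_scale:
  assumes ml: "multilinear_on sV sT n V tens" and mV: "module sV" and mT: "module sT"
    and sub: "\<forall>i\<in>{0..n}. module.subspace sV (V i)"
    and x: "x \<in> PiE {0..n} V"
  shows "sT c (tens x) = tens (x(0 := sV c (x 0)))"
    and "x(0 := sV c (x 0)) \<in> PiE {0..n} V"
proof -
  have x0: "x 0 \<in> V 0" using x by auto
  have "tens (x(0 := sV c (x 0) + sV 0 (x 0))) = sT c (tens (x(0 := x 0))) + sT 0 (tens (x(0 := x 0)))"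
    using ml x x0 unfolding multilinear_on_def by fastforce
  then show "sT c (tens x) = tens (x(0 := sV c (x 0)))"
    using module.scale_zero_left[OF mV] module.scale_zero_left[OF mT] by simp
  have "sV c (x 0) \<in> V 0" using sub x0 module.subspace_scale[OF mV] by auto
  then show "x(0 := sV c (x 0)) \<in> PiE {0..n} V" using x by (auto simp: PiE_def extensional_def)
qed

lemma sum_form:
  assumes tp: "is_tensor_product sV sT n V tens"
  shows "\<exists>(m::nat) x. (\<forall>j<m. x j \<in> PiE {0..n} V) \<and> v = (\<Sum>j<m. tens (x j))"
proof -
  have mV: "module sV" and mT: "module sT" and sub: "\<forall>i\<in>{0..n}. module.subspace sV (V i)"
    and ml: "multilinear_on sV sT n V tens" and sp: "module.span sT (tens ` PiE {0..n} V) = UNIV"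
    using tp unfolding is_tensor_product_def module_iff_vector_space by auto
  have "v \<in> module.span sT (tens ` PiE {0..n} V)" using sp by simp
  then show ?thesis
  proof (rule module.span_induct_alt[OF mT, where h="\<lambda>v. \<exists>(m::nat) x. (\<forall>j<m. x j \<in> PiE {0..n} V) \<and> v = (\<Sum>j<m. tens (x j))"])
    show "\<exists>(m::nat) x. (\<forall>j<m. x j \<in> PiE {0..n} V) \<and> 0 = (\<Sum>j<m. tens (x j))"
      by (rule_tac x=0 in exI) simp
  next
    fix c t w
    assume "t \<in> tens ` PiE {0..n} V" "\<exists>(m::nat) x. (\<forall>j<m. x j \<in> PiE {0..n} V) \<and> w = (\<Sum>j<m. tens (x j))"
    note 2 = this
    then obtain y where y: "y \<in> PiE {0..n} V" and t: "t = tens y" by blast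
    from 2 obtain m :: nat and x where x: "\<forall>j<m. x j \<in> PiE {0..n} V" and w: "w = (\<Sum>j<m. tens (x j))"
      by blast
    let ?x = "x(m := y(0 := sV c (y 0)))"
    have "\<forall>j<Suc m. ?x j \<in> PiE {0..n} V" using x tens_scale(2)[OF ml mV mT sub y] by auto
    moreover have "sT c t + w = (\<Sum>j<Suc m. tens (?x j))"
      using tens_scale(1)[OF ml mV mT sub y, of c] t w by (simp add: add.commute)
    ultimately show "\<exists>(m::nat) x. (\<forall>j<m. x j \<in> PiE {0..n} V) \<and> sT c t + w = (\<Sum>j<m. tens (x j))" by blast
  qed
qed

lemma connected_const:
  assumes w: "wsc n \<Omega>" and con: "wsc_connected n \<Omega>"
    and c: "\<forall>i\<in>{0..n}. c i \<in> facets_mult_at n \<Omega> i"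
    and lc: "\<forall>i\<in>{0..n}. \<forall>p\<in>facets_mult_at n \<Omega> i. \<alpha> p = \<alpha> (c i)"
    and p: "p \<in> facets_mult n \<Omega>"
  shows "\<alpha> p = \<alpha> (c 0)"
proof -
  define g where "g i = \<alpha> (c i)" for i
  have nb: "g a = g b \<and> a \<in> {0..n} \<and> b \<in> {0..n}" if nab: "neighbours n \<Omega> a b" for a b
  proof -
    obtain H where H: "wsc_facet n \<Omega> H" "a \<in> H" "b \<in> H"
      using nab unfolding neighbours_def by blast
    have ab: "a \<in> {0..n}" "b \<in> {0..n}" using H unfolding wsc_facet_def wsc_simplex_def by auto
    have "(H, 0) \<in> facets_mult n \<Omega>" using H unfolding facets_mult_def wsc_facet_def wsc_simplex_def
      by auto
    then have "(H, 0) \<in> facets_mult_at n \<Omega> a" "(H, 0) \<in> facets_mult_at n \<Omega> b"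
      using H unfolding facets_mult_at_def by auto
    then show ?thesis using lc ab unfolding g_def by metis
  qed
  have rt: "g b = g a" if "(neighbours n \<Omega>)\<^sup>*\<^sup>* a b" for a b
    using that
  proof (induct rule: rtranclp_induct)
    case base then show ?case by simp
  next
    case (step b d) then show ?case using nb by metis
  qed
  obtain F k where Fk: "p = (F, k)" by (cases p)
  have F: "wsc_facet n \<Omega> F" using p Fk unfolding facets_mult_def by auto
  then obtain i where i: "i \<in> F" using facet_nonempty[OF w] by blast
  have i0: "i \<in> {0..n}" using F i unfolding wsc_facet_def wsc_simplex_def by auto
  have "p \<in> facets_mult_at n \<Omega> i" using p Fk i unfolding facets_mult_at_def by auto
  then have "\<alpha> p = g i" using lc i0 unfolding g_def by blast
  also have "g i = g 0" using rt con i0 unfolding wsc_connected_def by auto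
  finally show ?thesis unfolding g_def .
qed

theorem theorem3p4:
  fixes n :: nat and \<Omega> :: "nat set \<Rightarrow> nat"
    and sV :: "complex \<Rightarrow> 'v::ab_group_add \<Rightarrow> 'v"
    and sT :: "complex \<Rightarrow> 't::ab_group_add \<Rightarrow> 't"
    and V :: "nat \<Rightarrow> 'v set" and tens :: "(nat \<Rightarrow> 'v) \<Rightarrow> 't"
  assumes "wsc n \<Omega>" and "wsc_connected n \<Omega>"
    and "is_tensor_product sV sT n V tens"
  shows "\<forall>v. rank_Omega sV n \<Omega> V tens v < \<infinity> \<and> has_Omega_decomposition sV n \<Omega> V tens v"
proof
  fix v
  note w = assms(1) and con = assms(2) and tp = assms(3)
  have mV: "module sV" and mT: "module sT" and sub: "\<forall>i\<in>{0..n}. module.subspace sV (V i)"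
    and ml: "multilinear_on sV sT n V tens"
    using tp unfolding is_tensor_product_def module_iff_vector_space by auto
  obtain m :: nat and x where x: "\<forall>j<m. x j \<in> PiE {0..n} V" and v: "v = (\<Sum>j<m. tens (x j))"
    using sum_form[OF tp] by blast
  define Ft where "Ft = facets_mult n \<Omega>"
  define Fi where "Fi i = facets_mult_at n \<Omega> i" for i
  define c where "c i = (SOME p. p \<in> Fi i)" for i
  have c: "\<forall>i\<in>{0..n}. c i \<in> Fi i"
  proof
    fix i assume i: "i \<in> {0..n}"
    obtain F where F: "wsc_facet n \<Omega> F" "i \<in> F" using facet_exists[OF w i] by blast
    have "(F, 0) \<in> Fi i" using F unfolding Fi_def facets_mult_at_def facets_mult_def
        wsc_facet_def wsc_simplex_def by auto
    then show "c i \<in> Fi i" unfolding c_def by (rule someI)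
  qed
  have FiFt: "Fi i \<subseteq> Ft" for i unfolding Fi_def Ft_def facets_mult_at_def by auto
  have Ftne: "Ft \<noteq> {}" using c FiFt by fastforce
  have finFt: "finite Ft" unfolding Ft_def by (rule Ft_finite)
  define I where "I = {..<m}"
  define vb where "vb i \<beta> = (if \<beta> = restrict (\<lambda>_. \<beta> (c i)) (Fi i) \<and> \<beta> (c i) < m
      then x (\<beta> (c i)) i else 0)" for i \<beta>
  have vbV: "vb i \<beta> \<in> V i" if "i \<in> {0..n}" for i \<beta>
    using x that sub module.subspace_0[OF mV] unfolding vb_def by (auto simp: PiE_def Pi_def)
  define T where "T \<alpha> = tens (restrict (\<lambda>i. vb i (restrict \<alpha> (Fi i))) {0..n})" for \<alpha>
  define G where "G = (\<lambda>j. restrict (\<lambda>_. j) Ft) ` I"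
  have GP: "G \<subseteq> PiE Ft (\<lambda>_. I)" unfolding G_def by auto
  have T0: "T \<alpha> = 0" if a: "\<alpha> \<in> PiE Ft (\<lambda>_. I) - G" for \<alpha>
  proof (rule ccontr)
    assume nz: "T \<alpha> \<noteq> 0"
    have yP: "restrict (\<lambda>i. vb i (restrict \<alpha> (Fi i))) {0..n} \<in> PiE {0..n} V"
      using vbV by auto
    have good: "vb i (restrict \<alpha> (Fi i)) \<noteq> 0" if i: "i \<in> {0..n}" for i
    proof
      assume "vb i (restrict \<alpha> (Fi i)) = 0"
      then have "T \<alpha> = 0" unfolding T_def using tens_zero[OF ml mV mT sub yP i] i by simp
      then show False using nz by simp
    qed
    have lc: "\<forall>i\<in>{0..n}. \<forall>p\<in>Fi i. \<alpha> p = \<alpha> (c i)"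
    proof (intro ballI)
      fix i p assume i: "i \<in> {0..n}" and p: "p \<in> Fi i"
      have "restrict \<alpha> (Fi i) = restrict (\<lambda>_. restrict \<alpha> (Fi i) (c i)) (Fi i)"
        using good[OF i] unfolding vb_def by metis
      then have "restrict \<alpha> (Fi i) p = restrict (\<lambda>_. restrict \<alpha> (Fi i) (c i)) (Fi i) p" by simp
      then show "\<alpha> p = \<alpha> (c i)" using p c i by simp
    qed
    have const: "\<forall>p\<in>Ft. \<alpha> p = \<alpha> (c 0)"
      using connected_const[OF w con, of c \<alpha>] c lc unfolding Fi_def Ft_def by blast
    have "c 0 \<in> Ft" using c FiFt by fastforce
    then have "\<alpha> (c 0) \<in> I" using a by (metis DiffD1 PiE_mem)
    moreover have "\<alpha> = restrict (\<lambda>_. \<alpha> (c 0)) Ft"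
      using const a by (auto simp: PiE_def extensional_def)
    ultimately have "\<alpha> \<in> G" unfolding G_def by blast
    then show False using a by blast
  qed
  have Tj: "T (restrict (\<lambda>_. j) Ft) = tens (x j)" if j: "j \<in> I" for j
  proof -
    have "vb i (restrict (restrict (\<lambda>_. j) Ft) (Fi i)) = x j i" if i: "i \<in> {0..n}" for i
    proof -
      have e: "restrict (restrict (\<lambda>_. j) Ft) (Fi i) = restrict (\<lambda>_. j) (Fi i)"
        using FiFt[of i] by (auto simp: restrict_def fun_eq_iff)
      show ?thesis unfolding e vb_def using c i j I_def by auto
    qed
    then have "restrict (\<lambda>i. vb i (restrict (restrict (\<lambda>_. j) Ft) (Fi i))) {0..n} = x j"
      using x j I_def by (auto simp: PiE_def extensional_def)
    then show ?thesis unfolding T_def by simp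
  qed
  have inj: "inj_on (\<lambda>j. restrict (\<lambda>_. j) Ft) I"
  proof
    fix a b assume "restrict (\<lambda>_. a) Ft = (restrict (\<lambda>_. b) Ft :: (nat set \<times> nat) \<Rightarrow> nat)"
    moreover obtain p where "p \<in> Ft" using Ftne by blast
    ultimately show "a = b" by (metis restrict_apply')
  qed
  have "(\<Sum>\<alpha> \<in> PiE Ft (\<lambda>_. I). T \<alpha>) = (\<Sum>\<alpha> \<in> G. T \<alpha>)"
    by (rule sum.mono_neutral_right) (use finFt GP T0 I_def in \<open>auto intro: finite_PiE\<close>)
  also have "\<dots> = (\<Sum>j\<in>I. T (restrict (\<lambda>_. j) Ft))"
    unfolding G_def by (rule sum.reindex[OF inj, unfolded comp_def])
  also have "\<dots> = (\<Sum>j\<in>I. tens (x j))" using Tj by simp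
  finally have sumeq: "v = (\<Sum>\<alpha> \<in> PiE Ft (\<lambda>_. I). T \<alpha>)" using v I_def by simp
  have dec: "Omega_decomposition sV n \<Omega> V tens v I vb"
    unfolding Omega_decomposition_def using sumeq vbV I_def
    unfolding T_def Ft_def Fi_def by auto
  then have hd: "has_Omega_decomposition sV n \<Omega> V tens v"
    unfolding has_Omega_decomposition_def by blast
  have "rank_Omega sV n \<Omega> V tens v \<le> enat (card I)"
    unfolding rank_Omega_def using dec by (auto intro: INF_lower)
  then have "rank_Omega sV n \<Omega> V tens v < \<infinity>"
    using enat_ord_simps(4) le_less_trans by blast
  then show "rank_Omega sV n \<Omega> V tens v < \<infinity> \<and> has_Omega_decomposition sV n \<Omega> V tens v"
    using hd by blast
qed

end
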